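(* Let $s\ge1$, $n=2s$, and let $A$ be the $n\times n$ matrix with $A_{ij}=1$ if $|i-j|\le s-1$ and $0$ otherwise. Let $D$ be the $s\times s$ matrix with $D_{ij}=1$ if $i+j\le s+1$ and $D_{ij}=2$ if $i+j>s+1$, and let $P$ be the $s\times s$ permutation matrix with $P_{ij}=1$ iff $i+j=s+1$. If $x$ is any eigenvector of $D$ with eigenvalue $\lambda$ and $y=\begin{bmatrix}x\\ Px\end{bmatrix}\in\mathbb R^{n}$, then $Ay=\lambda y$. *)

theory Defs
  imports "Jordan_Normal_Form.Char_Poly"
begin

text \<open>Matrices use 0-based indices; a paper index i (1-based) corresponds to i-1 here.\<close>

definition bandA :: "nat \<Rightarrow> real mat" where
  "bandA s = mat (2*s) (2*s) (\<lambda>(i,j). if nat \<bar>int i - int j\<bar> \<le> s - 1 then 1 else 0)"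

definition matD :: "nat \<Rightarrow> real mat" where
  "matD s = mat s s (\<lambda>(i,j). if (i+1) + (j+1) \<le> s + 1 then 1 else 2)"

definition permP :: "nat \<Rightarrow> real mat" where
  "permP s = mat s s (\<lambda>(i,j). if (i+1) + (j+1) = s + 1 then 1 else 0)"

end

theory Submission
  imports Defs
begin

lemma split_sum:
  fixes g :: "nat \<Rightarrow> real"
  shows "(\<Sum>j<2*s. g j) = (\<Sum>j<s. g j) + (\<Sum>m<s. g (2*s-1-m))"
proof -
  have "{..<2*s} = {..<s} \<union> {s..<2*s}" by auto
  hence "(\<Sum>j<2*s. g j) = (\<Sum>j<s. g j) + (\<Sum>j\<in>{s..<2*s}. g j)"
    by (metis sum.union_disjoint finite_lessThan finite_atLeastLessThan ivl_disj_int_one(2) lessThan_atLeast0)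
  moreover have "(\<Sum>j\<in>{s..<2*s}. g j) = (\<Sum>m<s. g (2*s-1-m))"
    by (rule sum.reindex_bij_witness[where i="\<lambda>m. 2*s-1-m" and j="\<lambda>j. 2*s-1-j"]) auto
  ultimately show ?thesis by simp
qed

lemma permP_mult:
  assumes x: "x \<in> carrier_vec s" and i: "i < s"
  shows "(permP s *\<^sub>v x) $ i = x $ (s - 1 - i)"
proof -
  have "(permP s *\<^sub>v x) $ i = (\<Sum>j<s. (if (i+1)+(j+1) = s+1 then 1 else 0) * x $ j)"
    using x i by (simp add: permP_def scalar_prod_def atLeast0LessThan)
  also have "\<dots> = (\<Sum>j\<in>{s-1-i}. x $ j)"
    using i by (intro sum.mono_neutral_cong_right) auto
  finally show ?thesis by simp
qed

theorem lemma13: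
  fixes s :: nat and x :: "real vec" and lam :: real
  assumes "s \<ge> 1"
    and "eigenvector (matD s) x lam"
  shows "bandA s *\<^sub>v (x @\<^sub>v (permP s *\<^sub>v x)) = lam \<cdot>\<^sub>v (x @\<^sub>v (permP s *\<^sub>v x))"
proof -
  have x: "x \<in> carrier_vec s" and ev: "matD s *\<^sub>v x = lam \<cdot>\<^sub>v x"
    using assms(2) by (auto simp: eigenvector_def matD_def)
  define y where "y = x @\<^sub>v (permP s *\<^sub>v x)"
  have dy: "dim_vec y = 2*s" using x by (simp add: y_def permP_def)
  have yk: "y $ k = (if k < s then x $ k else x $ (2*s-1-k))" if "k < 2*s" for k
  proof (cases "k < s")
    case False
    hence "k - s < s" using that by simp
    from permP_mult[OF x this] False that x show ?thesis
      by (simp add: y_def permP_def mult_2)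
  qed (use x in \<open>simp add: y_def permP_def\<close>)
  have Dx: "lam * x $ i = (\<Sum>m<s. (if (i+1)+(m+1) \<le> s+1 then 1 else 2) * x $ m)" if "i < s" for i
  proof -
    have "(matD s *\<^sub>v x) $ i = (lam \<cdot>\<^sub>v x) $ i" using ev by simp
    thus ?thesis using that x by (simp add: matD_def scalar_prod_def atLeast0LessThan)
  qed
  let ?A = "\<lambda>i j. if nat \<bar>int i - int j\<bar> \<le> s - 1 then 1 else (0::real)"
  have Ay: "(bandA s *\<^sub>v y) $ i = (\<Sum>m<s. (?A i m + ?A i (2*s-1-m)) * x $ m)" if "i < 2*s" for i
  proof -
    have "(bandA s *\<^sub>v y) $ i = (\<Sum>j<2*s. ?A i j * y $ j)"
      using that dy by (simp add: bandA_def scalar_prod_def atLeast0LessThan)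
    also have "\<dots> = (\<Sum>j<s. ?A i j * y $ j) + (\<Sum>m<s. ?A i (2*s-1-m) * y $ (2*s-1-m))"
      by (rule split_sum)
    also have "\<dots> = (\<Sum>m<s. ?A i m * x $ m) + (\<Sum>m<s. ?A i (2*s-1-m) * x $ m)"
      by (intro arg_cong2[where f="(+)"] sum.cong) (auto simp: yk)
    finally show ?thesis by (simp add: sum.distrib algebra_simps)
  qed
  show ?thesis
  proof (rule eq_vecI)
    show "dim_vec (bandA s *\<^sub>v (x @\<^sub>v (permP s *\<^sub>v x))) = dim_vec (lam \<cdot>\<^sub>v (x @\<^sub>v (permP s *\<^sub>v x)))"
      using dy by (simp add: bandA_def y_def)
    fix i assume "i < dim_vec (lam \<cdot>\<^sub>v (x @\<^sub>v (permP s *\<^sub>v x)))"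
    hence i: "i < 2*s" using dy by (simp add: y_def)
    show "(bandA s *\<^sub>v (x @\<^sub>v (permP s *\<^sub>v x))) $ i = (lam \<cdot>\<^sub>v (x @\<^sub>v (permP s *\<^sub>v x))) $ i"
    proof (cases "i < s")
      case True
      have "(bandA s *\<^sub>v y) $ i = (\<Sum>m<s. (if (i+1)+(m+1) \<le> s+1 then 1 else 2) * x $ m)"
        unfolding Ay[OF i] by (rule sum.cong) (use True in auto)
      also have "\<dots> = lam * y $ i" using Dx[OF True] yk[OF i] True by simp
      finally show ?thesis using i dy by (simp add: y_def[symmetric])
    next
      case False
      define t where "t = i - s"
      have t: "t < s" "i = s + t" using False i by (auto simp: t_def)
      have "(bandA s *\<^sub>v y) $ i = (\<Sum>m<s. (if (s-1-t+1)+(m+1) \<le> s+1 then 1 else 2) * x $ m)"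
        unfolding Ay[OF i] by (rule sum.cong) (use t in auto)
      also have "\<dots> = lam * x $ (s-1-t)" using Dx[of "s-1-t"] t by simp
      also have "\<dots> = lam * y $ i" using yk[OF i] t by simp
      finally show ?thesis using i dy by (simp add: y_def[symmetric])
    qed
  qed
qed

end
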